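(* Let $X$ be a contractible finite $T_0$-space with more than one point. Then $|X|-\mathrm{rank}(X_M)=1$.
   Context: A finite $T_0$-space is identified with a finite poset via $x\le y$ iff $U_x\subseteq U_y$, where $U_x$ is the minimal open set containing $x$. For a labelling $X=\{x_1,\dots,x_n\}$, $X_M=(x_{i,j})$ is the $n\times n$ matrix with $x_{i,j}=0$ if $x_i\le x_j$ and $x_{i,j}=1$ otherwise. *)

theory Defs
  imports "HOL-Analysis.Analysis" "Jordan_Normal_Form.DL_Rank"
begin

definition minimal_open :: "'a topology \<Rightarrow> 'a \<Rightarrow> 'a set" where
  "minimal_open X a = \<Inter>{U. openin X U \<and> a \<in> U}"

definition fin_space_le :: "'a topology \<Rightarrow> 'a \<Rightarrow> 'a \<Rightarrow> bool" where
  "fin_space_le X a b \<longleftrightarrow> minimal_open X a \<subseteq> minimal_open X b"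

text \<open>The matrix X_M for the labelling x_0,...,x_(n-1) (indices shifted to start at 0):
  entry (i,j) is 0 if x_i \<le> x_j and 1 otherwise.\<close>
definition space_matrix :: "'a topology \<Rightarrow> (nat \<Rightarrow> 'a) \<Rightarrow> real mat" where
  "space_matrix X x = mat (card (topspace X)) (card (topspace X))
     (\<lambda>(i, j). if fin_space_le X (x i) (x j) then 0 else 1)"

end

theory Submission
  imports Defs
begin


definition po :: "'a set \<Rightarrow> ('a \<Rightarrow> 'a \<Rightarrow> bool) \<Rightarrow> bool" where
  "po S lr \<longleftrightarrow> (\<forall>a\<in>S. lr a a) \<and> (\<forall>a\<in>S. \<forall>b\<in>S. lr a b \<longrightarrow> lr b a \<longrightarrow> a = b)
     \<and> (\<forall>a\<in>S. \<forall>b\<in>S. \<forall>c\<in>S. lr a b \<longrightarrow> lr b c \<longrightarrow> lr a c)"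

definition okm :: "'a set \<Rightarrow> ('a \<Rightarrow> 'a \<Rightarrow> bool) \<Rightarrow> ('a \<Rightarrow> 'a) \<Rightarrow> bool" where
  "okm S lr f \<longleftrightarrow> (\<forall>a\<in>S. f a \<in> S) \<and> (\<forall>a\<in>S. \<forall>b\<in>S. lr a b \<longrightarrow> lr (f a) (f b))"

definition cmp :: "'a set \<Rightarrow> ('a \<Rightarrow> 'a \<Rightarrow> bool) \<Rightarrow> (('a \<Rightarrow> 'a) \<times> ('a \<Rightarrow> 'a)) set" where
  "cmp S lr = {(f,g). okm S lr f \<and> okm S lr g \<and>
      ((\<forall>a\<in>S. lr (f a) (g a)) \<or> (\<forall>a\<in>S. lr (g a) (f a)))}"

definition contr :: "'a set \<Rightarrow> ('a \<Rightarrow> 'a \<Rightarrow> bool) \<Rightarrow> bool" where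
  "contr S lr \<longleftrightarrow> (\<exists>f g c. c \<in> S \<and> (\<forall>a\<in>S. f a = a) \<and> (\<forall>a\<in>S. g a = c) \<and> (f,g) \<in> (cmp S lr)\<^sup>*)"

definition dbeat where
  "dbeat S lr x y \<longleftrightarrow> x\<in>S \<and> y\<in>S \<and> y\<noteq>x \<and> lr y x \<and> (\<forall>z\<in>S. lr z x \<longrightarrow> z \<noteq> x \<longrightarrow> lr z y)"
definition ubeat where
  "ubeat S lr x y \<longleftrightarrow> x\<in>S \<and> y\<in>S \<and> y\<noteq>x \<and> lr x y \<and> (\<forall>z\<in>S. lr x z \<longrightarrow> z \<noteq> x \<longrightarrow> lr y z)"

lemma po_subset: "po S lr \<Longrightarrow> T \<subseteq> S \<Longrightarrow> po T lr"
  unfolding po_def by blast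

lemma NB_down:
  assumes po: "po S lr" and fin: "finite S" and nb: "\<not>(\<exists>x y. dbeat S lr x y)"
    and g: "okm S lr g" and lr: "\<forall>a\<in>S. lr (g a) a"
  shows "\<forall>a\<in>S. g a = a"
proof -
  have "a \<in> S \<longrightarrow> g a = a" for a
  proof (induction a rule: measure_induct_rule[where f="\<lambda>a. card {z\<in>S. lr z a}"])
    case (less x)
    show ?case
    proof
      assume x: "x \<in> S"
      show "g x = x"
      proof (rule ccontr)
        assume ne: "g x \<noteq> x"
        have "\<forall>z\<in>S. lr z x \<longrightarrow> z \<noteq> x \<longrightarrow> lr z (g x)"
        proof (intro ballI impI)
          fix z assume z: "z\<in>S" "lr z x" "z\<noteq>x"
          have "{w\<in>S. lr w z} \<subset> {w\<in>S. lr w x}"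
          proof
            show "{w\<in>S. lr w z} \<subseteq> {w\<in>S. lr w x}" using po z x unfolding po_def by blast
            have "x \<notin> {w\<in>S. lr w z}" using po z x unfolding po_def by blast
            moreover have "x \<in> {w\<in>S. lr w x}" using po x unfolding po_def by blast
            ultimately show "{w\<in>S. lr w z} \<noteq> {w\<in>S. lr w x}" by blast
          qed
          hence "card {w\<in>S. lr w z} < card {w\<in>S. lr w x}"
            by (rule psubset_card_mono[rotated]) (use fin in simp)
          hence "g z = z" using less z by auto
          then show "lr z (g x)" using g z x unfolding okm_def by metis
        qed
        hence "dbeat S lr x (g x)" using x ne g lr unfolding dbeat_def okm_def by blast
        thus False using nb by blast
      qed
    qed
  qed
  thus ?thesis by blast
qed

lemma NB_up:
  assumes po: "po S lr" and fin: "finite S" and nb: "\<not>(\<exists>x y. ubeat S lr x y)"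
    and g: "okm S lr g" and lr: "\<forall>a\<in>S. lr a (g a)"
  shows "\<forall>a\<in>S. g a = a"
proof -
  have "a \<in> S \<longrightarrow> g a = a" for a
  proof (induction a rule: measure_induct_rule[where f="\<lambda>a. card {z\<in>S. lr a z}"])
    case (less x)
    show ?case
    proof
      assume x: "x \<in> S"
      show "g x = x"
      proof (rule ccontr)
        assume ne: "g x \<noteq> x"
        have "\<forall>z\<in>S. lr x z \<longrightarrow> z \<noteq> x \<longrightarrow> lr (g x) z"
        proof (intro ballI impI)
          fix z assume z: "z\<in>S" "lr x z" "z\<noteq>x"
          have "{w\<in>S. lr z w} \<subset> {w\<in>S. lr x w}"
          proof
            show "{w\<in>S. lr z w} \<subseteq> {w\<in>S. lr x w}" using po z x unfolding po_def by blast
            have "x \<notin> {w\<in>S. lr z w}" using po z x unfolding po_def by blast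
            moreover have "x \<in> {w\<in>S. lr x w}" using po x unfolding po_def by blast
            ultimately show "{w\<in>S. lr z w} \<noteq> {w\<in>S. lr x w}" by blast
          qed
          hence "card {w\<in>S. lr z w} < card {w\<in>S. lr x w}"
            by (rule psubset_card_mono[rotated]) (use fin in simp)
          hence "g z = z" using less z by auto
          then show "lr (g x) z" using g z x unfolding okm_def by metis
        qed
        hence "ubeat S lr x (g x)" using x ne g lr unfolding ubeat_def okm_def by blast
        thus False using nb by blast
      qed
    qed
  qed
  thus ?thesis by blast
qed

lemma NB:
  assumes po: "po S lr" and fin: "finite S" and nb: "\<not>(\<exists>x y. dbeat S lr x y)" "\<not>(\<exists>x y. ubeat S lr x y)"
    and fg: "(f,g) \<in> cmp S lr" and f: "\<forall>a\<in>S. f a = a"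
  shows "\<forall>a\<in>S. g a = a"
proof -
  have g: "okm S lr g" and c: "(\<forall>a\<in>S. lr (f a) (g a)) \<or> (\<forall>a\<in>S. lr (g a) (f a))"
    using fg unfolding cmp_def by auto
  show ?thesis
  proof (cases "\<forall>a\<in>S. lr (f a) (g a)")
    case True
    then show ?thesis using NB_up[OF po fin nb(2) g] f by auto
  next
    case False
    then show ?thesis using NB_down[OF po fin nb(1) g] f c by auto
  qed
qed

lemma contr_sub:
  assumes c: "contr S lr" and sub: "S' \<subseteq> S"
    and rS: "\<forall>a\<in>S. r a \<in> S'" and rm: "\<forall>a\<in>S. \<forall>b\<in>S. lr a b \<longrightarrow> lr (r a) (r b)"
    and rid: "\<forall>a\<in>S'. r a = a"
  shows "contr S' lr"
proof -
  obtain f g c where cS: "c \<in> S" and f: "\<forall>a\<in>S. f a = a" and g: "\<forall>a\<in>S. g a = c"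
    and fg: "(f,g) \<in> (cmp S lr)\<^sup>*" using c unfolding contr_def by blast
  have "(r \<circ> f, r \<circ> g) \<in> (cmp S' lr)\<^sup>*"
    using fg
  proof (induction rule: rtrancl_induct)
    case base
    then show ?case by simp
  next
    case (step h h')
    have "(r \<circ> h, r \<circ> h') \<in> cmp S' lr"
      using step(2) sub rS rm unfolding cmp_def okm_def by (auto 0 0) (meson subsetD)+
    then show ?case by (rule rtrancl_into_rtrancl[OF step(3)])
  qed
  moreover have "r c \<in> S'" using rS cS by blast
  moreover have "\<forall>a\<in>S'. (r \<circ> f) a = a" using f rid sub by auto
  moreover have "\<forall>a\<in>S'. (r \<circ> g) a = r c" using g sub by auto
  ultimately show ?thesis unfolding contr_def by blast
qed



definition Mx :: "('a \<Rightarrow> 'a \<Rightarrow> bool) \<Rightarrow> 'a \<Rightarrow> 'a \<Rightarrow> real" where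
  "Mx lr z y = (if lr z y then 0 else 1)"

definition kerv :: "'a set \<Rightarrow> ('a \<Rightarrow> 'a \<Rightarrow> bool) \<Rightarrow> ('a \<Rightarrow> real) \<Rightarrow> bool" where
  "kerv S lr v \<longleftrightarrow> (\<forall>z\<in>S. (\<Sum>y\<in>S. Mx lr z y * v y) = 0)"

definition K1 :: "'a set \<Rightarrow> ('a \<Rightarrow> 'a \<Rightarrow> bool) \<Rightarrow> bool" where
  "K1 S lr \<longleftrightarrow> (\<exists>v0. (\<exists>y\<in>S. v0 y \<noteq> 0) \<and> kerv S lr v0 \<and>
      (\<forall>v. kerv S lr v \<longrightarrow> (\<exists>c. \<forall>y\<in>S. v y = c * v0 y)))"

lemma kerv_cong: "\<forall>y\<in>S. v y = w y \<Longrightarrow> kerv S lr v = kerv S lr w"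
  unfolding kerv_def by (metis (no_types, lifting) sum.cong)

lemma K1_single: "lr c c \<Longrightarrow> K1 {c} lr"
  unfolding K1_def kerv_def Mx_def
  by (rule exI[of _ "\<lambda>_. 1"]) auto

lemma step_down:
  assumes po: "po S lr" and fin: "finite S" and b: "dbeat S lr x y0" and K: "K1 (S-{x}) lr"
  shows "K1 S lr"
proof -
  let ?S' = "S - {x}"
  have xS: "x \<in> S" and y0S: "y0 \<in> ?S'" and y0x: "y0 \<noteq> x" using b unfolding dbeat_def by auto
  have Sins: "S = insert x ?S'" using xS by blast
  have fin': "finite ?S'" using fin by simp
  have Mrel: "Mx lr z x = Mx lr z y0 - (if z = x then 1 else 0)" if z: "z \<in> S" for z
  proof (cases "z = x")
    case True
    have "lr x x" using po xS unfolding po_def by blast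
    moreover have "\<not> lr x y0" using po b y0x unfolding po_def dbeat_def by blast
    ultimately show ?thesis using True unfolding Mx_def by simp
  next
    case False
    have "lr z x \<longleftrightarrow> lr z y0" using po b z False unfolding po_def dbeat_def by blast
    then show ?thesis using False unfolding Mx_def by simp
  qed
  define R where "R v = (\<lambda>a. if a = y0 then v y0 + v x else v a)" for v :: "'a \<Rightarrow> real"
  have key: "(\<Sum>y\<in>S. Mx lr z y * v y) = (\<Sum>y\<in>?S'. Mx lr z y * R v y) - (if z = x then v x else 0)"
    if z: "z \<in> S" for v z
  proof -
    have h1: "(\<Sum>y\<in>S. Mx lr z y * v y) = Mx lr z x * v x + (\<Sum>y\<in>?S'. Mx lr z y * v y)"
      by (subst Sins, subst sum.insert) (use fin' in auto)
    have h3: "Mx lr z x * v x = Mx lr z y0 * v x - (if z = x then v x else 0)"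
      by (simp add: Mrel[OF z] left_diff_distrib)
    have "(\<Sum>y\<in>?S'. Mx lr z y * R v y) = (\<Sum>y\<in>?S'. Mx lr z y * v y + (if y = y0 then Mx lr z y0 * v x else 0))"
      by (rule sum.cong) (auto simp: R_def algebra_simps)
    moreover have "\<dots> = (\<Sum>y\<in>?S'. Mx lr z y * v y) + Mx lr z y0 * v x"
      using y0S fin' by (simp add: sum.distrib)
    ultimately show ?thesis using h1 h3 by linarith
  qed
  define s where "s v' = (\<Sum>y\<in>?S'. Mx lr x y * v' y)" for v' :: "'a \<Rightarrow> real"
  define E where "E v' = (\<lambda>a. if a = x then s v' else if a = y0 then v' y0 - s v' else v' a)" for v'
  have RE: "\<forall>a\<in>?S'. R (E v') a = v' a" for v'
    unfolding R_def E_def using y0x by auto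
  have kerE: "kerv S lr (E v')" if kv: "kerv ?S' lr v'" for v'
    unfolding kerv_def
  proof
    fix z assume z: "z \<in> S"
    have "(\<Sum>y\<in>S. Mx lr z y * E v' y) = (\<Sum>y\<in>?S'. Mx lr z y * v' y) - (if z = x then s v' else 0)"
      unfolding key[OF z] using RE[of v'] by (simp add: E_def)
    also have "\<dots> = 0"
    proof (cases "z = x")
      case True then show ?thesis by (simp add: s_def)
    next
      case False then show ?thesis using kv z unfolding kerv_def by auto
    qed
    finally show "(\<Sum>y\<in>S. Mx lr z y * E v' y) = 0" .
  qed
  have kerR: "kerv ?S' lr (R v) \<and> v x = s (R v)" if kv: "kerv S lr v" for v
  proof
    show "kerv ?S' lr (R v)" unfolding kerv_def
    proof
      fix z assume z: "z \<in> ?S'"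
      then have "z \<in> S" "z \<noteq> x" by auto
      then show "(\<Sum>y\<in>?S'. Mx lr z y * R v y) = 0" using key[of z v] kv unfolding kerv_def by auto
    qed
    show "v x = s (R v)" using key[OF xS, of v] kv xS unfolding kerv_def s_def by auto
  qed
  obtain v0' where nz: "\<exists>y\<in>?S'. v0' y \<noteq> 0" and k0: "kerv ?S' lr v0'"
    and sp: "\<forall>v. kerv ?S' lr v \<longrightarrow> (\<exists>c. \<forall>y\<in>?S'. v y = c * v0' y)"
    using K unfolding K1_def by blast
  show ?thesis unfolding K1_def
  proof (rule exI[of _ "E v0'"], intro conjI allI impI)
    show "\<exists>y\<in>S. E v0' y \<noteq> 0"
    proof (rule ccontr)
      assume "\<not> (\<exists>y\<in>S. E v0' y \<noteq> 0)"
      then have "\<forall>a\<in>?S'. R (E v0') a = 0" unfolding R_def using xS by auto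
      then show False using RE[of v0'] nz by auto
    qed
    show "kerv S lr (E v0')" by (rule kerE[OF k0])
    fix v assume kv: "kerv S lr v"
    obtain c where c: "\<forall>y\<in>?S'. R v y = c * v0' y" using sp kerR[OF kv] by blast
    have vx: "v x = c * s v0'"
    proof -
      have "v x = s (R v)" using kerR[OF kv] by blast
      also have "\<dots> = (\<Sum>y\<in>?S'. c * (Mx lr x y * v0' y))" unfolding s_def
        by (rule sum.cong) (use c in auto)
      also have "\<dots> = c * s v0'" unfolding s_def by (simp add: sum_distrib_left)
      finally show ?thesis .
    qed
    show "\<exists>c. \<forall>y\<in>S. v y = c * E v0' y"
    proof (intro exI ballI)
      fix a assume a: "a \<in> S"
      show "v a = c * E v0' a"
      proof (cases "a = x")
        case True then show ?thesis using vx by (simp add: E_def)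
      next
        case False
        note aS' = a False
        show ?thesis
        proof (cases "a = y0")
          case True
          have "v y0 + v x = c * v0' y0" using bspec[OF c y0S] unfolding R_def by simp
          then show ?thesis using True vx y0x by (simp add: E_def algebra_simps)
        next
          case False
          have "a \<in> ?S'" using aS' by auto
          then show ?thesis using bspec[OF c \<open>a \<in> ?S'\<close>] False aS' unfolding R_def E_def by simp
        qed
      qed
    qed
  qed
qed

lemma step_up:
  assumes po: "po S lr" and fin: "finite S" and b: "ubeat S lr x y0" and K: "K1 (S-{x}) lr"
  shows "K1 S lr"
proof -
  let ?S' = "S - {x}"
  have xS: "x \<in> S" and y0S: "y0 \<in> ?S'" and y0x: "y0 \<noteq> x" using b unfolding ubeat_def by auto
  have Sins: "S = insert x ?S'" using xS by blast
  have fin': "finite ?S'" using fin by simp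
  have splt: "(\<Sum>y\<in>S. Mx lr z y * v y) = Mx lr z x * v x + (\<Sum>y\<in>?S'. Mx lr z y * v y)" for z v
    by (subst Sins, subst sum.insert) (use fin' in auto)
  have rowrel: "(\<Sum>y\<in>S. Mx lr x y * v y) = (\<Sum>y\<in>S. Mx lr y0 y * v y) - v x" for v
  proof -
    have "lr x x" using po xS unfolding po_def by blast
    then have "Mx lr x x = 0" unfolding Mx_def by simp
    moreover have "\<not> lr y0 x" using po b y0x unfolding po_def ubeat_def by blast
    then have "Mx lr y0 x = 1" unfolding Mx_def by simp
    moreover have "(\<Sum>y\<in>?S'. Mx lr x y * v y) = (\<Sum>y\<in>?S'. Mx lr y0 y * v y)"
    proof (rule sum.cong)
      fix y assume y: "y \<in> ?S'"
      have "lr x y \<longleftrightarrow> lr y0 y" using po b y unfolding po_def ubeat_def by blast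
      then show "Mx lr x y * v y = Mx lr y0 y * v y" unfolding Mx_def by simp
    qed simp
    ultimately show ?thesis using splt[of x v] splt[of y0 v] by simp
  qed
  have kerchar: "kerv S lr v \<longleftrightarrow> v x = 0 \<and> kerv ?S' lr v" for v
  proof
    assume kv: "kerv S lr v"
    then have vx: "v x = 0" using rowrel[of v] xS y0S unfolding kerv_def by auto
    moreover have "kerv ?S' lr v" unfolding kerv_def
    proof
      fix z assume "z \<in> ?S'"
      then show "(\<Sum>y\<in>?S'. Mx lr z y * v y) = 0" using splt[of z v] kv vx unfolding kerv_def by auto
    qed
    ultimately show "v x = 0 \<and> kerv ?S' lr v" by blast
  next
    assume a: "v x = 0 \<and> kerv ?S' lr v"
    have z': "(\<Sum>y\<in>S. Mx lr z y * v y) = 0" if "z \<in> ?S'" for z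
      using splt[of z v] a that unfolding kerv_def by auto
    show "kerv S lr v" unfolding kerv_def
    proof
      fix z assume z: "z \<in> S"
      show "(\<Sum>y\<in>S. Mx lr z y * v y) = 0"
      proof (cases "z = x")
        case True then show ?thesis using rowrel[of v] z'[OF y0S] a by simp
      next
        case False then show ?thesis using z' z by auto
      qed
    qed
  qed
  obtain v0' where nz: "\<exists>y\<in>?S'. v0' y \<noteq> 0" and k0: "kerv ?S' lr v0'"
    and sp: "\<forall>v. kerv ?S' lr v \<longrightarrow> (\<exists>c. \<forall>y\<in>?S'. v y = c * v0' y)"
    using K unfolding K1_def by blast
  define v0 where "v0 = (\<lambda>a. if a = x then 0 else v0' a)"
  have agree: "\<forall>y\<in>?S'. v0 y = v0' y" unfolding v0_def by auto
  show ?thesis unfolding K1_def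
  proof (rule exI[of _ v0], intro conjI allI impI)
    show "\<exists>y\<in>S. v0 y \<noteq> 0" using nz agree by auto
    show "kerv S lr v0" unfolding kerchar using kerv_cong[OF agree] k0 by (simp add: v0_def)
    fix v assume "kerv S lr v"
    then have vx: "v x = 0" and kv: "kerv ?S' lr v" using kerchar by auto
    obtain c where c: "\<forall>y\<in>?S'. v y = c * v0' y" using sp kv by blast
    show "\<exists>c. \<forall>y\<in>S. v y = c * v0 y"
      using c vx unfolding v0_def by (intro exI[of _ c]) auto
  qed
qed

lemma main_K:
  "finite S \<Longrightarrow> po S lr \<Longrightarrow> contr S lr \<Longrightarrow> S \<noteq> {} \<Longrightarrow> K1 S lr"
proof (induction "card S" arbitrary: S rule: less_induct)
  case less
  note fin = less.prems(1) and po = less.prems(2) and ct = less.prems(3)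
  show ?case
  proof (cases "\<exists>x y. dbeat S lr x y")
    case True
    then obtain x y where b: "dbeat S lr x y" by blast
    let ?r = "\<lambda>a. if a = x then y else a"
    have xS: "x \<in> S" and yS: "y \<in> S - {x}" using b unfolding dbeat_def by auto
    have "contr (S - {x}) lr"
    proof (rule contr_sub[OF ct, of _ ?r])
      show "\<forall>a\<in>S. ?r a \<in> S - {x}" using yS by auto
      show "\<forall>a\<in>S. \<forall>b\<in>S. lr a b \<longrightarrow> lr (?r a) (?r b)"
      proof (intro ballI impI)
        fix a b' assume ab: "a \<in> S" "b' \<in> S" "lr a b'"
        have rf: "\<forall>a\<in>S. lr a a" and tr: "\<forall>a\<in>S. \<forall>b\<in>S. \<forall>c\<in>S. lr a b \<longrightarrow> lr b c \<longrightarrow> lr a c"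
          using po unfolding po_def by blast+
        show "lr (?r a) (?r b')"
        proof (cases "a = x")
          case T1: True
          show ?thesis
          proof (cases "b' = x")
            case True then show ?thesis using T1 rf b unfolding dbeat_def by simp
          next
            case False
            have "lr y x" "y \<in> S" "x \<in> S" using b unfolding dbeat_def by blast+
            then have "lr y b'" using T1 ab tr[rule_format, of y x b'] by simp
            then show ?thesis using T1 False by simp
          qed
        next
          case F1: False
          show ?thesis
          proof (cases "b' = x")
            case True
            have "lr a y" using F1 True ab b unfolding dbeat_def by blast
            then show ?thesis using F1 True by simp
          next
            case False then show ?thesis using F1 ab by simp
          qed
        qed
      qed
    qed auto
    moreover have "card (S - {x}) < card S" using fin xS by (rule card_Diff1_less)
    moreover have "finite (S - {x})" using fin by simp
    moreover have "po (S - {x}) lr" using po_subset[OF po] by blast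
    moreover have "S - {x} \<noteq> {}" using yS by blast
    ultimately have "K1 (S - {x}) lr" using less.hyps by blast
    then show ?thesis using step_down[OF po fin b] by blast
  next
    case nd: False
    show ?thesis
    proof (cases "\<exists>x y. ubeat S lr x y")
      case True
      then obtain x y where b: "ubeat S lr x y" by blast
      let ?r = "\<lambda>a. if a = x then y else a"
      have xS: "x \<in> S" and yS: "y \<in> S - {x}" using b unfolding ubeat_def by auto
      have "contr (S - {x}) lr"
      proof (rule contr_sub[OF ct, of _ ?r])
        show "\<forall>a\<in>S. ?r a \<in> S - {x}" using yS by auto
        show "\<forall>a\<in>S. \<forall>b\<in>S. lr a b \<longrightarrow> lr (?r a) (?r b)"
      proof (intro ballI impI)
        fix a b' assume ab: "a \<in> S" "b' \<in> S" "lr a b'"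
        have rf: "\<forall>a\<in>S. lr a a" and tr: "\<forall>a\<in>S. \<forall>b\<in>S. \<forall>c\<in>S. lr a b \<longrightarrow> lr b c \<longrightarrow> lr a c"
          using po unfolding po_def by blast+
        show "lr (?r a) (?r b')"
        proof (cases "a = x")
          case T1: True
          show ?thesis
          proof (cases "b' = x")
            case True then show ?thesis using T1 rf b unfolding ubeat_def by simp
          next
            case False
            have "lr y b'" using T1 False ab b unfolding ubeat_def by blast
            then show ?thesis using T1 False by simp
          qed
        next
          case F1: False
          show ?thesis
          proof (cases "b' = x")
            case True
            have "lr x y" "y \<in> S" "x \<in> S" using b unfolding ubeat_def by blast+
            then have "lr a y" using True ab tr[rule_format, of a x y] by simp
            then show ?thesis using F1 True by simp
          next
            case False then show ?thesis using F1 ab by simp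
          qed
        qed
      qed
      qed auto
      moreover have "card (S - {x}) < card S" using fin xS by (rule card_Diff1_less)
      moreover have "finite (S - {x})" using fin by simp
      moreover have "po (S - {x}) lr" using po_subset[OF po] by blast
      moreover have "S - {x} \<noteq> {}" using yS by blast
      ultimately have "K1 (S - {x}) lr" using less.hyps by blast
      then show ?thesis using step_up[OF po fin b] by blast
    next
      case nu: False
      obtain f g c where cS: "c \<in> S" and f: "\<forall>a\<in>S. f a = a" and g: "\<forall>a\<in>S. g a = c"
        and fg: "(f,g) \<in> (cmp S lr)\<^sup>*" using ct unfolding contr_def by blast
      have gid: "\<forall>a\<in>S. h a = a" if "(f,h) \<in> (cmp S lr)\<^sup>*" for h
        using that
      proof (induction rule: rtrancl_induct)
        case base then show ?case using f by (rule ballI[OF bspec])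
      next
        case (step h h')
        show ?case by (rule NB[OF po fin nd nu step(2) step(3)])
      qed
      have Sc: "S = {c}"
      proof
        show "S \<subseteq> {c}"
        proof
          fix a assume a: "a \<in> S"
          then have "g a = a" using gid[OF fg] by blast
          moreover have "g a = c" using g a by blast
          ultimately show "a \<in> {c}" by simp
        qed
        show "{c} \<subseteq> S" using cS by simp
      qed
      have "lr c c" using po cS unfolding po_def by blast
      then show ?thesis unfolding Sc by (rule K1_single)
    qed
  qed
qed



lemma mulvec_zero_iff:
  fixes A :: "'a::comm_ring_1 mat"
  assumes A: "A \<in> carrier_mat n m" and w: "w \<in> carrier_vec m"
  shows "(A *\<^sub>v w = 0\<^sub>v n) \<longleftrightarrow> (\<forall>i<n. (\<Sum>j<m. A $$ (i,j) * w $ j) = 0)"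
proof -
  have e: "(A *\<^sub>v w) $ i = (\<Sum>j<m. A $$ (i,j) * w $ j)" if "i < n" for i
    using A w that by (auto simp: scalar_prod_def lessThan_atLeast0 intro!: sum.cong)
  show ?thesis
  proof
    assume "A *\<^sub>v w = 0\<^sub>v n"
    then show "\<forall>i<n. (\<Sum>j<m. A $$ (i,j) * w $ j) = 0" using e by (metis index_zero_vec(1))
  next
    assume h: "\<forall>i<n. (\<Sum>j<m. A $$ (i,j) * w $ j) = 0"
    show "A *\<^sub>v w = 0\<^sub>v n"
      by (rule eq_vecI) (use A h e in auto)
  qed
qed

definition sk :: "nat \<Rightarrow> nat \<Rightarrow> nat" where "sk k j = (if j < k then j else Suc j)"

lemma sk_bij: "k < n \<Longrightarrow> bij_betw (sk k) {..<n-1} ({..<n} - {k})"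
  unfolding bij_betw_def inj_on_def sk_def
proof (intro conjI ballI impI)
  assume k: "k < n"
  show "(if j < k then j else Suc j) = (if j' < k then j' else Suc j') \<Longrightarrow> j = j'" for j j'
    by (auto split: if_splits)
  show "(\<lambda>j. if j < k then j else Suc j) ` {..<n - 1} = {..<n} - {k}"
  proof
    show "(\<lambda>j. if j < k then j else Suc j) ` {..<n - 1} \<subseteq> {..<n} - {k}" using k by auto
    show "{..<n} - {k} \<subseteq> (\<lambda>j. if j < k then j else Suc j) ` {..<n - 1}"
    proof
      fix i assume i: "i \<in> {..<n} - {k}"
      show "i \<in> (\<lambda>j. if j < k then j else Suc j) ` {..<n - 1}"
      proof (cases "i < k")
        case True then show ?thesis using k by (intro image_eqI[of _ _ i]) auto
      next
        case False then show ?thesis using i by (intro image_eqI[of _ _ "i - 1"]) auto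
      qed
    qed
  qed
qed

lemma rank_ge:
  fixes A :: "real mat"
  assumes A: "A \<in> carrier_mat n n" and k: "k < n"
    and inj: "\<forall>w\<in>carrier_vec n. A *\<^sub>v w = 0\<^sub>v n \<longrightarrow> w $ k = 0 \<longrightarrow> w = 0\<^sub>v n"
  shows "vec_space.rank n A \<ge> n - 1"
proof -
  interpret V: vec_space "TYPE(real)" n .
  define B where "B = mat n (n-1) (\<lambda>(i,j). A $$ (i, sk k j))"
  have B: "B \<in> carrier_mat n (n-1)" unfolding B_def by simp
  have skn: "sk k j < n" if "j < n - 1" for j using that k unfolding sk_def by auto
  have Binj: "u = 0\<^sub>v (n-1)" if u: "u \<in> carrier_vec (n-1)" and Bu: "B *\<^sub>v u = 0\<^sub>v n" for u
  proof -
    define w where "w = vec n (\<lambda>i. if i < k then u $ i else if i = k then 0 else u $ (i - 1))"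
    have w: "w \<in> carrier_vec n" unfolding w_def by simp
    have wsk: "w $ sk k j = u $ j" if "j < n - 1" for j
      using that skn[OF that] unfolding w_def sk_def by auto
    have wk: "w $ k = 0" unfolding w_def using k by simp
    have "A *\<^sub>v w = 0\<^sub>v n"
      unfolding mulvec_zero_iff[OF A w]
    proof (intro allI impI)
      fix i assume i: "i < n"
      have "(\<Sum>j<n. A $$ (i,j) * w $ j) = A $$ (i,k) * w $ k + (\<Sum>j\<in>{..<n}-{k}. A $$ (i,j) * w $ j)"
        using k by (simp add: sum.remove)
      also have "\<dots> = (\<Sum>j\<in>{..<n}-{k}. A $$ (i,j) * w $ j)" using wk by simp
      also have "\<dots> = (\<Sum>j<n-1. A $$ (i, sk k j) * w $ sk k j)"
        using sum.reindex_bij_betw[OF sk_bij[OF k], of "\<lambda>j. A $$ (i,j) * w $ j"] by simp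
      also have "\<dots> = (\<Sum>j<n-1. B $$ (i, j) * u $ j)"
        by (rule sum.cong) (use i wsk in \<open>auto simp: B_def\<close>)
      also have "\<dots> = 0" using Bu unfolding mulvec_zero_iff[OF B u] using i by blast
      finally show "(\<Sum>j<n. A $$ (i,j) * w $ j) = 0" .
    qed
    then have "w = 0\<^sub>v n" using inj w wk by blast
    show "u = 0\<^sub>v (n-1)"
    proof (rule eq_vecI)
      fix j assume "j < dim_vec (0\<^sub>v (n-1) :: real vec)"
      then have j: "j < n - 1" by simp
      have "u $ j = w $ sk k j" using wsk[OF j] by simp
      also have "\<dots> = 0" using \<open>w = 0\<^sub>v n\<close> skn[OF j(1)] by simp
      finally show "u $ j = 0\<^sub>v (n-1) $ j" using j by simp
    qed (use u in simp)
  qed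
  have dist: "distinct (cols B)"
  proof (rule ccontr)
    assume "\<not> distinct (cols B)"
    then obtain i j where ij: "i \<noteq> j" "i < n - 1" "j < n - 1" "cols B ! i = cols B ! j"
      using B by (auto simp: distinct_conv_nth)
    then have cij: "col B i = col B j" using B by simp
    define u where "u = vec (n-1) (\<lambda>l. (if l = i then 1 else 0) - (if l = j then 1 else 0) :: real)"
    have u: "u \<in> carrier_vec (n-1)" unfolding u_def by simp
    have "B *\<^sub>v u = 0\<^sub>v n"
      unfolding mulvec_zero_iff[OF B u]
    proof (intro allI impI)
      fix r assume r: "r < n"
      have "(\<Sum>l<n-1. B $$ (r,l) * u $ l) = (\<Sum>l<n-1. (if l = i then B $$ (r,l) else 0) - (if l = j then B $$ (r,l) else 0))"
        by (rule sum.cong) (auto simp: u_def)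
      also have "\<dots> = B $$ (r,i) - B $$ (r,j)" using ij by (simp add: sum_subtractf)
      also have "\<dots> = 0"
        using arg_cong[OF cij, of "\<lambda>v. v $ r"] r ij B by simp
      finally show "(\<Sum>l<n-1. B $$ (r,l) * u $ l) = 0" .
    qed
    then have "u = 0\<^sub>v (n-1)" using Binj u by blast
    then have "u $ i = 0" using ij by simp
    then show False using ij unfolding u_def by simp
  qed
  have indpt: "V.lin_indpt (set (cols B))"
  proof
    assume "V.lin_dep (set (cols B))"
    then obtain v where "v \<in> carrier_vec (n-1)" "v \<noteq> 0\<^sub>v (n-1)" "B *\<^sub>v v = 0\<^sub>v n"
      using V.lin_depE[OF B _ dist] by blast
    then show False using Binj by blast
  qed
  have sub: "set (cols B) \<subseteq> set (cols A)"
  proof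
    fix c assume "c \<in> set (cols B)"
    then obtain j where j: "j < n - 1" "c = col B j" using B
      by (metis carrier_matD(2) cols_length cols_nth in_set_conv_nth)
    have "c = col A (sk k j)"
      using j A B skn[OF j(1)] by (auto simp: B_def)
    then show "c \<in> set (cols A)" using skn[OF j(1)] A
      by (metis carrier_matD(2) cols_length cols_nth nth_mem)
  qed
  have "card (set (cols B)) = n - 1" using dist B by (simp add: distinct_card)
  then show ?thesis using V.rank_ge_card_indpt[OF A sub indpt] by simp
qed

lemma rank_le:
  fixes A :: "real mat"
  assumes A: "A \<in> carrier_mat n n" and v: "v \<in> carrier_vec n" "v \<noteq> 0\<^sub>v n" "A *\<^sub>v v = 0\<^sub>v n"
  shows "vec_space.rank n A < n"
proof -
  interpret V: vec_space "TYPE(real)" n .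
  have "det A = 0" using det_0_iff_vec_prod_zero_field[OF A] v by blast
  then show ?thesis using V.det_zero_low_rank[OF A] by blast
qed


lemma le_char: "fin_space_le X a b \<longleftrightarrow> a \<in> minimal_open X b"
  unfolding fin_space_le_def minimal_open_def by blast

lemma le_char2: "fin_space_le X a b \<longleftrightarrow> (\<forall>V. openin X V \<and> b \<in> V \<longrightarrow> a \<in> V)"
  unfolding le_char minimal_open_def by blast

lemma min_open:
  assumes "finite (topspace X)" "a \<in> topspace X"
  shows "openin X (minimal_open X a)"
  unfolding minimal_open_def
proof (rule openin_Inter)
  have "{U. openin X U \<and> a \<in> U} \<subseteq> Pow (topspace X)" using openin_subset by blast
  then show "finite {U. openin X U \<and> a \<in> U}" using assms(1) finite_subset by blast
  show "{U. openin X U \<and> a \<in> U} \<noteq> {}" using assms(2) by blast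
qed auto

lemma self_min_open: "a \<in> minimal_open X a"
  unfolding minimal_open_def by blast

lemma po_top:
  assumes "t0_space X"
  shows "po (topspace X) (fin_space_le X)"
  unfolding po_def
proof (intro conjI ballI impI)
  show "fin_space_le X a a" for a unfolding fin_space_le_def by blast
  show "fin_space_le X a c" if "fin_space_le X a b" "fin_space_le X b c" for a b c
    using that unfolding fin_space_le_def by blast
  fix a b assume ab: "a \<in> topspace X" "b \<in> topspace X" "fin_space_le X a b" "fin_space_le X b a"
  show "a = b"
  proof (rule ccontr)
    assume "a \<noteq> b"
    then obtain U where U: "openin X U" "a \<notin> U \<longleftrightarrow> b \<in> U"
      using assms ab(1,2) unfolding t0_space_def by blast
    then show False using ab(3,4) unfolding le_char2 by blast
  qed
qed

lemma cont_mono: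
  assumes f: "continuous_map X X f" and ab: "a \<in> topspace X" "b \<in> topspace X" "fin_space_le X a b"
  shows "fin_space_le X (f a) (f b)"
  unfolding le_char2
proof (intro allI impI)
  fix V assume V: "openin X V \<and> f b \<in> V"
  have "openin X {x \<in> topspace X. f x \<in> V}"
    using openin_continuous_map_preimage[OF f] V by blast
  moreover have "b \<in> {x \<in> topspace X. f x \<in> V}" using ab V by blast
  ultimately have "a \<in> {x \<in> topspace X. f x \<in> V}" using ab(3) unfolding le_char2 by blast
  then show "f a \<in> V" by blast
qed

lemma contr_top:
  assumes fin: "finite (topspace X)" and t0: "t0_space X" and cs: "contractible_space X"
    and ne: "topspace X \<noteq> {}"
  shows "contr (topspace X) (fin_space_le X)"
proof -
  let ?S = "topspace X" and ?lr = "fin_space_le X"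
  let ?I = "top_of_set {0..1::real}"
  obtain c where "homotopic_with (\<lambda>x. True) X X id (\<lambda>x. c)"
    using cs unfolding contractible_space_def by blast
  then obtain h where hc: "continuous_map (prod_topology ?I X) X h"
    and h0': "\<forall>x. h (0, x) = id x" and h1: "\<forall>x. h (1, x) = c"
    unfolding homotopic_with_def by blast
  have h0: "\<forall>x. h (0, x) = x" using h0' by simp
  define F where "F t = (\<lambda>a. h (t, a))" for t
  have Fc: "continuous_map X X (F t)" if t: "t \<in> {0..1}" for t
  proof -
    have "continuous_map X (prod_topology ?I X) (\<lambda>x. (t, x))"
      by (intro continuous_map_pairedI) (use t in auto)
    from continuous_map_compose[OF this hc] show ?thesis by (simp add: F_def o_def)
  qed
  have Gc: "continuous_map ?I X (\<lambda>t. h (t, a))" if a: "a \<in> ?S" for a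
  proof -
    have "continuous_map ?I (prod_topology ?I X) (\<lambda>t. (t, a))"
      by (intro continuous_map_pairedI) (use a in auto)
    from continuous_map_compose[OF this hc] show ?thesis by (simp add: o_def)
  qed
  have okF: "okm ?S ?lr (F t)" if t: "t \<in> {0..1}" for t
    unfolding okm_def
    using continuous_map_image_subset_topspace[OF Fc[OF t]] cont_mono[OF Fc[OF t]] by blast
  have loc: "\<exists>N. openin ?I N \<and> t0 \<in> N \<and> (\<forall>t\<in>N. \<forall>a\<in>?S. ?lr (F t a) (F t0 a))"
    if t0: "t0 \<in> {0..1}" for t0
  proof -
    define N where "N = (\<Inter>a\<in>?S. {t \<in> topspace ?I. h (t, a) \<in> minimal_open X (h (t0, a))})"
    have "openin ?I N" unfolding N_def
    proof (rule openin_INT2)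
      fix a assume a: "a \<in> ?S"
      have "h (t0, a) \<in> ?S" using Fc[OF t0] a continuous_map_image_subset_topspace unfolding F_def by blast
      then show "openin ?I {t \<in> topspace ?I. h (t, a) \<in> minimal_open X (h (t0, a))}"
        using openin_continuous_map_preimage[OF Gc[OF a] min_open[OF fin]] by blast
    qed (use fin ne in auto)
    moreover have "t0 \<in> N" unfolding N_def using t0 self_min_open by auto
    moreover have "\<forall>t\<in>N. \<forall>a\<in>?S. ?lr (F t a) (F t0 a)"
      unfolding N_def F_def le_char by blast
    ultimately show ?thesis by blast
  qed
  define A where "A = {t \<in> {0..1}. (F 0, F t) \<in> (cmp ?S ?lr)\<^sup>*}"
  have same: "\<exists>N. openin ?I N \<and> t0 \<in> N \<and> (\<forall>t\<in>N. t \<in> A \<longleftrightarrow> t0 \<in> A)"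
    if t0: "t0 \<in> {0..1}" for t0
  proof -
    obtain N where N: "openin ?I N" "t0 \<in> N" "\<forall>t\<in>N. \<forall>a\<in>?S. ?lr (F t a) (F t0 a)"
      using loc[OF t0] by blast
    have NI: "N \<subseteq> {0..1}" using openin_subset[OF N(1)] by simp
    have "t \<in> A \<longleftrightarrow> t0 \<in> A" if t: "t \<in> N" for t
    proof -
      have tI: "t \<in> {0..1}" using NI t by blast
      have c1: "(F t, F t0) \<in> cmp ?S ?lr" and c2: "(F t0, F t) \<in> cmp ?S ?lr"
        unfolding cmp_def using okF[OF tI] okF[OF t0] N(3) t by auto
      show ?thesis
      proof
        assume "t \<in> A"
        then show "t0 \<in> A" unfolding A_def using t0 rtrancl_into_rtrancl[OF _ c1] by blast
      next
        assume "t0 \<in> A"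
        then show "t \<in> A" unfolding A_def using tI rtrancl_into_rtrancl[OF _ c2] by blast
      qed
    qed
    then show ?thesis using N by blast
  qed
  have openA: "openin ?I A"
    unfolding openin_subopen[of _ A]
  proof
    fix t0 assume t0A: "t0 \<in> A"
    then have t0: "t0 \<in> {0..1}" unfolding A_def by blast
    obtain N where N: "openin ?I N" "t0 \<in> N" "\<forall>t\<in>N. t \<in> A \<longleftrightarrow> t0 \<in> A" using same[OF t0] by blast
    then show "\<exists>T. openin ?I T \<and> t0 \<in> T \<and> T \<subseteq> A" using t0A by blast
  qed
  have openC: "openin ?I ({0..1} - A)"
    unfolding openin_subopen[of _ "{0..1} - A"]
  proof
    fix t0 assume t0A: "t0 \<in> {0..1} - A"
    then have t0: "t0 \<in> {0..1}" by blast
    obtain N where N: "openin ?I N" "t0 \<in> N" "\<forall>t\<in>N. t \<in> A \<longleftrightarrow> t0 \<in> A" using same[OF t0] by blast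
    have "N \<subseteq> {0..1}" using openin_subset[OF N(1)] by simp
    then show "\<exists>T. openin ?I T \<and> t0 \<in> T \<and> T \<subseteq> {0..1} - A" using t0A N by blast
  qed
  have AI: "A \<subseteq> {0..1}" unfolding A_def by blast
  have closedA: "closedin ?I A"
    unfolding closedin_def using openC AI by simp
  have "0 \<in> A" unfolding A_def by simp
  moreover have "A = {} \<or> A = {0..1}"
    using connected_Icc[of "0::real" 1] openA closedA unfolding connected_clopen by blast
  ultimately have "A = {0..1}" by blast
  then have "1 \<in> A" by simp
  then have R: "(F 0, F 1) \<in> (cmp ?S ?lr)\<^sup>*" unfolding A_def by blast
  obtain a0 where a0: "a0 \<in> ?S" using ne by blast
  have cS: "c \<in> ?S"
  proof -
    have "F 1 ` ?S \<subseteq> ?S" using continuous_map_image_subset_topspace[OF Fc[of 1]] by simp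
    then have "F 1 a0 \<in> ?S" using a0 by blast
    then show ?thesis using h1 unfolding F_def by simp
  qed
  have F0: "\<forall>a\<in>?S. F 0 a = a" using h0 unfolding F_def by simp
  have F1: "\<forall>a\<in>?S. F 1 a = c" using h1 unfolding F_def by simp
  show ?thesis unfolding contr_def
    by (rule exI[of _ "F 0"], rule exI[of _ "F 1"], rule exI[of _ c]) (intro conjI cS F0 F1 R)
qed

theorem mainTheorem11:
  fixes X :: "'a topology" and x :: "nat \<Rightarrow> 'a"
  assumes "finite (topspace X)"
    and "t0_space X"
    and "contractible_space X"
    and "card (topspace X) > 1"
    and "bij_betw x {0..<card (topspace X)} (topspace X)"
  shows "int (card (topspace X))
           - int (vec_space.rank (card (topspace X)) (space_matrix X x)) = 1"
proof -
  let ?S = "topspace X" and ?lr = "fin_space_le X"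
  define n where "n = card ?S"
  have fin: "finite ?S" and n1: "n > 1" and bij: "bij_betw x {..<n} ?S"
    using assms by (auto simp: n_def lessThan_atLeast0)
  have ne: "?S \<noteq> {}" using n1 n_def by auto
  have po: "po ?S ?lr" by (rule po_top[OF assms(2)])
  have K: "K1 ?S ?lr" by (rule main_K[OF fin po contr_top[OF fin assms(2) assms(3) ne] ne])
  then obtain v0 y where y: "y \<in> ?S" "v0 y \<noteq> 0" and k0: "kerv ?S ?lr v0"
    and sp: "\<forall>v. kerv ?S ?lr v \<longrightarrow> (\<exists>c. \<forall>y\<in>?S. v y = c * v0 y)"
    unfolding K1_def by blast
  define A where "A = space_matrix X x"
  have A: "A \<in> carrier_mat n n" unfolding A_def space_matrix_def n_def by simp
  have Aij: "A $$ (i,j) = Mx ?lr (x i) (x j)" if "i < n" "j < n" for i j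
    using that unfolding A_def space_matrix_def Mx_def n_def by simp
  define xi where "xi = inv_into {..<n} x"
  have xS: "x j \<in> ?S" if "j < n" for j using bij that unfolding bij_betw_def by auto
  have xix: "xi (x j) = j" if "j < n" for j
    using bij that unfolding xi_def bij_betw_def by (simp add: inv_into_f_f)
  have xin: "xi a < n" "x (xi a) = a" if "a \<in> ?S" for a
  proof -
    have img: "x ` {..<n} = ?S" using bij by (simp add: bij_betw_def)
    have "a \<in> x ` {..<n}" using img that by simp
    then show "xi a < n" "x (xi a) = a"
      unfolding xi_def using inv_into_into[of a x "{..<n}"] f_inv_into_f[of a x "{..<n}"] by auto
  qed
  have trans: "(A *\<^sub>v w = 0\<^sub>v n) \<longleftrightarrow> kerv ?S ?lr (\<lambda>a. w $ xi a)" if w: "w \<in> carrier_vec n" for w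
  proof -
    have sumeq: "(\<Sum>j<n. A $$ (i,j) * w $ j) = (\<Sum>a\<in>?S. Mx ?lr (x i) a * w $ xi a)" if i: "i < n" for i
    proof -
      have "(\<Sum>j<n. A $$ (i,j) * w $ j) = (\<Sum>j<n. Mx ?lr (x i) (x j) * w $ xi (x j))"
        by (rule sum.cong) (use i Aij xix in auto)
      also have "\<dots> = (\<Sum>a\<in>?S. Mx ?lr (x i) a * w $ xi a)"
        using sum.reindex_bij_betw[OF bij, of "\<lambda>a. Mx ?lr (x i) a * w $ xi a"] by simp
      finally show ?thesis .
    qed
    have "(A *\<^sub>v w = 0\<^sub>v n) \<longleftrightarrow> (\<forall>i<n. (\<Sum>a\<in>?S. Mx ?lr (x i) a * w $ xi a) = 0)"
      unfolding mulvec_zero_iff[OF A w] using sumeq by simp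
    also have "\<dots> \<longleftrightarrow> (\<forall>z\<in>?S. (\<Sum>a\<in>?S. Mx ?lr z a * w $ xi a) = 0)"
    proof
      assume h: "\<forall>i<n. (\<Sum>a\<in>?S. Mx ?lr (x i) a * w $ xi a) = 0"
      show "\<forall>z\<in>?S. (\<Sum>a\<in>?S. Mx ?lr z a * w $ xi a) = 0"
      proof
        fix z assume z: "z \<in> ?S"
        have "(\<Sum>a\<in>?S. Mx ?lr (x (xi z)) a * w $ xi a) = 0" using h xin(1)[OF z] by blast
        then show "(\<Sum>a\<in>?S. Mx ?lr z a * w $ xi a) = 0" using xin(2)[OF z] by simp
      qed
    next
      assume h: "\<forall>z\<in>?S. (\<Sum>a\<in>?S. Mx ?lr z a * w $ xi a) = 0"
      show "\<forall>i<n. (\<Sum>a\<in>?S. Mx ?lr (x i) a * w $ xi a) = 0"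
        using h xS by blast
    qed
    also have "\<dots> \<longleftrightarrow> kerv ?S ?lr (\<lambda>a. w $ xi a)"
      unfolding kerv_def ..
    finally show ?thesis .
  qed
  define u0 where "u0 = vec n (\<lambda>j. v0 (x j))"
  have u0: "u0 \<in> carrier_vec n" unfolding u0_def by simp
  have u0v: "\<forall>a\<in>?S. u0 $ xi a = v0 a" unfolding u0_def using xin by simp
  have "kerv ?S ?lr (\<lambda>a. u0 $ xi a)" using kerv_cong[OF u0v] k0 by simp
  then have Au0: "A *\<^sub>v u0 = 0\<^sub>v n" using trans[OF u0] by simp
  have "u0 $ xi y \<noteq> 0" unfolding u0_def using xin[OF y(1)] y by simp
  then have "u0 \<noteq> 0\<^sub>v n"
  proof (rule contrapos_nn)
    assume "u0 = 0\<^sub>v n"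
    then show "u0 $ xi y = 0" using xin(1)[OF y(1)] by simp
  qed
  then have lt: "vec_space.rank n A < n" by (rule rank_le[OF A u0 _ Au0])
  have inj: "\<forall>w\<in>carrier_vec n. A *\<^sub>v w = 0\<^sub>v n \<longrightarrow> w $ xi y = 0 \<longrightarrow> w = 0\<^sub>v n"
  proof (intro ballI impI)
    fix w :: "real vec" assume w: "w \<in> carrier_vec n" and Aw: "A *\<^sub>v w = 0\<^sub>v n" and wk: "w $ xi y = 0"
    have "kerv ?S ?lr (\<lambda>a. w $ xi a)" using trans[OF w] Aw by simp
    then obtain c where c: "\<forall>a\<in>?S. w $ xi a = c * v0 a" using sp by blast
    have "c * v0 y = 0" using c y(1) wk by simp
    then have "c = 0" using y(2) by simp
    show "w = 0\<^sub>v n"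
    proof (rule eq_vecI)
      fix j assume "j < dim_vec (0\<^sub>v n :: real vec)"
      then have j: "j < n" by simp
      have "w $ j = w $ xi (x j)" using xix[OF j] by simp
      also have "\<dots> = 0" using c xS[OF j] \<open>c = 0\<close> by simp
      finally show "w $ j = 0\<^sub>v n $ j" using j by simp
    qed (use w in simp)
  qed
  have ge: "vec_space.rank n A \<ge> n - 1" by (rule rank_ge[OF A xin(1)[OF y(1)] inj])
  have "vec_space.rank n A = n - 1" using lt ge by linarith
  then show ?thesis using n1 unfolding n_def A_def by simp
qed

end
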